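(* Let $L$ be an interval locale and $E$ a presheaf on $L_{+}$. Then the composite morphism $E\to\operatorname{Im}(E)\to L(\operatorname{Im}(E))$ is initial among all presheaf maps $E\to F$ with $F$ a sheaf of monomorphisms on $L_{+}$.
   Context: A locale $L$ is a complete lattice in which finite meets distribute over arbitrary joins, with Grothendieck topology: $\{b_j\le a\}$ covers $a$ iff $\bigvee_j b_j=a$. $L$ is an interval if it is totally ordered and densely ordered. $i$ is the bottom element of $L$; $L_{+}=L\sqcup\{0\}$ with a new bottom $0<i$. A sheaf of monomorphisms on $L_{+}$ is a sheaf $F$ with $F(b)\to F(a)$ injective for all $a\le b$ in $L$. For a presheaf $E$ on $L_{+}$, $\operatorname{Im}(E)(s)$ is the image of $E(s)\to E(i)$ for $s\in L$, $\operatorname{Im}(E)(0)=\ast$. For a presheaf $F$ on $L_{+}$, $LF(a)=\varprojlim_{0<b<a}F(b)$ for $a\in L$, $a\neq i$, $LF(i)=F(i)$, $LF(0)=\ast$; $\eta:F\to LF$ is the canonical map. *)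

theory Defs
  imports Main "HOL-Library.Option_ord"
begin

text \<open>Presheaves of sets on a poset 'p (viewed as a category), with values in a carrier
type 'x. ob F a is the set F(a); res F b a : F(b) \<rightarrow> F(a) is the restriction for a \<le> b.\<close>

record ('p, 'x) psh =
  ob  :: "'p \<Rightarrow> 'x set"
  res :: "'p \<Rightarrow> 'p \<Rightarrow> 'x \<Rightarrow> 'x"

definition presheaf :: "('p::order, 'x) psh \<Rightarrow> bool" where
  "presheaf F \<longleftrightarrow>
     (\<forall>a b x. a \<le> b \<and> x \<in> ob F b \<longrightarrow> res F b a x \<in> ob F a) \<and>
     (\<forall>a x. x \<in> ob F a \<longrightarrow> res F a a x = x) \<and>
     (\<forall>a b c x. c \<le> b \<and> b \<le> a \<and> x \<in> ob F a \<longrightarrow> res F b c (res F a b x) = res F a c x)"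

definition psh_hom :: "('p::order, 'x) psh \<Rightarrow> ('p, 'y) psh \<Rightarrow> ('p \<Rightarrow> 'x \<Rightarrow> 'y) \<Rightarrow> bool" where
  "psh_hom E F f \<longleftrightarrow>
     (\<forall>a x. x \<in> ob E a \<longrightarrow> f a x \<in> ob F a) \<and>
     (\<forall>a b x. a \<le> b \<and> x \<in> ob E b \<longrightarrow> f a (res E b a x) = res F b a (f b x))"

definition hom_comp :: "('p \<Rightarrow> 'y \<Rightarrow> 'z) \<Rightarrow> ('p \<Rightarrow> 'x \<Rightarrow> 'y) \<Rightarrow> ('p \<Rightarrow> 'x \<Rightarrow> 'z)" where
  "hom_comp g f = (\<lambda>a x. g a (f a x))"

definition is_sheaf :: "('p::complete_lattice, 'x) psh \<Rightarrow> bool" where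
  "is_sheaf F \<longleftrightarrow> presheaf F \<and>
     (\<forall>a B s. B \<subseteq> {b. b \<le> a} \<and> Sup B = a \<and>
        (\<forall>b\<in>B. s b \<in> ob F b) \<and>
        (\<forall>b\<in>B. \<forall>c\<in>B. res F b (inf b c) (s b) = res F c (inf b c) (s c))
        \<longrightarrow> (\<exists>!x. x \<in> ob F a \<and> (\<forall>b\<in>B. res F a b x = s b)))"

text \<open>L_+ is modelled as 'l option (HOL-Library.Option_ord): None is the new bottom 0,
Some a corresponds to a \<in> L; Some bot is i.\<close>

definition sheaf_of_monos :: "('l::complete_lattice option, 'x) psh \<Rightarrow> bool" where
  "sheaf_of_monos F \<longleftrightarrow> is_sheaf F \<and>
     (\<forall>a b. a \<le> b \<longrightarrow> inj_on (res F (Some b) (Some a)) (ob F (Some b)))"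

definition Im :: "('l::complete_lattice option, 'x) psh \<Rightarrow> ('l option, 'x) psh" where
  "Im E = \<lparr> ob = (\<lambda>s. case s of None \<Rightarrow> {undefined}
                             | Some t \<Rightarrow> res E (Some t) (Some bot) ` ob E (Some t)),
            res = (\<lambda>b a x. case a of None \<Rightarrow> undefined | Some _ \<Rightarrow> x) \<rparr>"

definition Im_map :: "('l::complete_lattice option, 'x) psh \<Rightarrow> 'l option \<Rightarrow> 'x \<Rightarrow> 'x" where
  "Im_map E = (\<lambda>s x. case s of None \<Rightarrow> undefined | Some t \<Rightarrow> res E (Some t) (Some bot) x)"

text \<open>LF(a) = lim_{0<b<a} F(b) for a \<in> L, a \<noteq> i (compatible families indexed by the
b \<in> L with b < a, extended by undefined elsewhere); LF(i) = F(i); LF(0) a singleton.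
Carrier: Inl for elements of F(i) (and the point of LF(0)), Inr for compatible families.\<close>
definition compat_fams :: "('l::complete_lattice option, 'x) psh \<Rightarrow> 'l \<Rightarrow> ('l \<Rightarrow> 'x) set" where
  "compat_fams F a = {s. (\<forall>b. b < a \<longrightarrow> s b \<in> ob F (Some b)) \<and>
                         (\<forall>b. \<not> b < a \<longrightarrow> s b = undefined) \<and>
                         (\<forall>b c. c \<le> b \<and> b < a \<longrightarrow> res F (Some b) (Some c) (s b) = s c)}"

definition Lsh :: "('l::complete_lattice option, 'x) psh \<Rightarrow> ('l option, 'x + ('l \<Rightarrow> 'x)) psh" where
  "Lsh F = \<lparr> ob = (\<lambda>s. case s of None \<Rightarrow> {Inl undefined}
                             | Some a \<Rightarrow> if a = bot then Inl ` ob F (Some bot)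
                                         else Inr ` compat_fams F a),
            res = (\<lambda>b a y. case a of None \<Rightarrow> Inl undefined
                     | Some c \<Rightarrow> (case y of Inl x \<Rightarrow> Inl x
                                  | Inr s \<Rightarrow> if c = bot then Inl (s bot)
                                            else Inr (\<lambda>d. if d < c then s d else undefined))) \<rparr>"

definition eta :: "('l::complete_lattice option, 'x) psh \<Rightarrow> 'l option \<Rightarrow> 'x \<Rightarrow> 'x + ('l \<Rightarrow> 'x)" where
  "eta F = (\<lambda>s x. case s of None \<Rightarrow> Inl undefined
                 | Some a \<Rightarrow> if a = bot then Inl x
                             else Inr (\<lambda>b. if b < a then res F (Some a) (Some b) x else undefined))"

text \<open>Interval locale: totally and densely ordered complete lattice (a complete chain is
automatically a frame).\<close>
definition dense_ordered :: "'l::order itself \<Rightarrow> bool" where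
  "dense_ordered _ \<longleftrightarrow> (\<forall>x y::'l. x < y \<longrightarrow> (\<exists>z. x < z \<and> z < y))"

end

theory Submission imports Defs begin

definition cf :: "'l::complete_linorder \<Rightarrow> 'x \<Rightarrow> 'l \<Rightarrow> 'x" where
  "cf t v = (\<lambda>d. if d < t then v else undefined)"
definition mk :: "'l::complete_linorder \<Rightarrow> 'x \<Rightarrow> 'x + ('l \<Rightarrow> 'x)" where
  "mk t v = (if t = bot then Inl v else Inr (cf t v))"
definition val :: "'x + ('l::complete_linorder \<Rightarrow> 'x) \<Rightarrow> 'x" where
  "val y = (case y of Inl v \<Rightarrow> v | Inr s \<Rightarrow> s bot)"
definition VV :: "('l::complete_linorder option,'x) psh \<Rightarrow> 'l \<Rightarrow> 'x set" where
  "VV E t = {v. v \<in> ob (Im E) (Some bot) \<and> (\<forall>d<t. v \<in> ob (Im E) (Some d))}"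

lemma val_mk[simp]: "val (mk (t::'l::complete_linorder) v) = v"
  by (auto simp: val_def mk_def cf_def bot.not_eq_extremum)

lemma mk_inj: "mk (t::'l::complete_linorder) u = mk t v \<Longrightarrow> u = v"
  by (metis val_mk)

lemma res_Im[simp]: "res (Im E) b (Some c) x = x"
  by (simp add: Im_def)

lemma ob_Im: "ob (Im E) (Some t) = res E (Some t) (Some bot) ` ob E (Some t)"
  by (simp add: Im_def)

lemma ob_Ls_None[simp]: "ob (Lsh G) None = {Inl undefined}"
  by (simp add: Lsh_def)

lemma res_Ls_None[simp]: "res (Lsh G) b None y = Inl undefined"
  by (simp add: Lsh_def)

lemma compat_Im:
  assumes "(t::'l::complete_linorder) \<noteq> bot"
  shows "compat_fams (Im E) t = cf t ` VV E t"
proof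
  show "compat_fams (Im E) t \<subseteq> cf t ` VV E t"
  proof
    fix s assume s: "s \<in> compat_fams (Im E) t"
    have bt: "bot < t" using assms by (simp add: bot.not_eq_extremum)
    have eq: "\<And>d. d < t \<Longrightarrow> s d = s bot"
      using s by (simp add: compat_fams_def)
    have "s = cf t (s bot)"
      using s eq by (auto simp: compat_fams_def cf_def)
    moreover have "s bot \<in> VV E t"
    proof -
      have m: "\<And>b. b < t \<Longrightarrow> s b \<in> ob (Im E) (Some b)"
        using s by (simp add: compat_fams_def)
      show ?thesis unfolding VV_def using m[OF bt] m eq by auto
    qed
    ultimately show "s \<in> cf t ` VV E t" by blast
  qed
next
  show "cf t ` VV E t \<subseteq> compat_fams (Im E) t"
    by (auto simp: compat_fams_def cf_def VV_def)
qed

lemma ob_Ls: "ob (Lsh (Im E)) (Some (t::'l::complete_linorder)) = mk t ` VV E t"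
proof (cases "t = bot")
  case True
  then show ?thesis by (simp add: Lsh_def mk_def VV_def)
next
  case False
  then show ?thesis by (simp add: Lsh_def mk_def compat_Im image_image)
qed

lemma res_Ls:
  assumes "c \<le> (t::'l::complete_linorder)"
  shows "res (Lsh G) (Some t) (Some c) (mk t v) = mk c v"
proof (cases "t = bot")
  case True
  then have "c = bot" using assms bot_unique by blast
  then show ?thesis using True by (simp add: Lsh_def mk_def)
next
  case False
  then have bt: "bot < t" by (simp add: bot.not_eq_extremum)
  show ?thesis
  proof (cases "c = bot")
    case True
    then show ?thesis using False bt by (simp add: Lsh_def mk_def cf_def)
  next
    case c: False
    have "(\<lambda>d. if d < c then cf t v d else undefined) = cf c v"
      using assms by (auto simp: cf_def intro!: ext dest: less_le_trans)
    then show ?thesis using False c by (simp add: Lsh_def mk_def)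
  qed
qed

lemma VV_anti: "c \<le> (t::'l::complete_linorder) \<Longrightarrow> VV E t \<subseteq> VV E c"
  by (auto simp: VV_def dest: less_le_trans)

lemma ob_Ls_Some_E: "y \<in> ob (Lsh (Im E)) (Some (t::'l::complete_linorder)) \<Longrightarrow> y = mk t (val y) \<and> val y \<in> VV E t"
  by (auto simp: ob_Ls)

lemma presheaf_Ls: "presheaf (Lsh (Im (E::('l::complete_linorder option,'x) psh)))"
  unfolding presheaf_def
proof (intro conjI allI impI)
  fix a b :: "'l option" and x
  assume h: "a \<le> b \<and> x \<in> ob (Lsh (Im E)) b"
  show "res (Lsh (Im E)) b a x \<in> ob (Lsh (Im E)) a"
  proof (cases a)
    case None then show ?thesis by simp
  next
    case (Some c)
    then obtain t where b: "b = Some t" and ct: "c \<le> t" using h by (cases b) auto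
    then have x: "x = mk t (val x)" "val x \<in> VV E t" using h ob_Ls_Some_E by blast+
    then show ?thesis using Some b ct res_Ls[OF ct, of "Im E" "val x"] VV_anti[OF ct, of E]
      by (auto simp: ob_Ls)
  qed
next
  fix a :: "'l option" and x
  assume h: "x \<in> ob (Lsh (Im E)) a"
  show "res (Lsh (Im E)) a a x = x"
  proof (cases a)
    case None then show ?thesis using h by simp
  next
    case (Some t)
    then have "x = mk t (val x)" using h ob_Ls_Some_E by blast
    then show ?thesis using Some res_Ls[of t t "Im E" "val x"] by simp
  qed
next
  fix a b c :: "'l option" and x
  assume h: "c \<le> b \<and> b \<le> a \<and> x \<in> ob (Lsh (Im E)) a"
  show "res (Lsh (Im E)) b c (res (Lsh (Im E)) a b x) = res (Lsh (Im E)) a c x"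
  proof (cases c)
    case None then show ?thesis by simp
  next
    case (Some c')
    then obtain b' a' where ab: "b = Some b'" "a = Some a'" "c' \<le> b'" "b' \<le> a'"
      using h by (cases b; cases a) auto
    then have "x = mk a' (val x)" using h ob_Ls_Some_E by blast
    then show ?thesis using ab Some res_Ls[of b' a' "Im E" "val x"] res_Ls[of c' b' "Im E" "val x"]
       res_Ls[of c' a' "Im E" "val x"] order_trans[of c' b' a'] by metis
  qed
qed

lemma sheaf_Ls: "sheaf_of_monos (Lsh (Im (E::('l::complete_linorder option,'x) psh)))"
  unfolding sheaf_of_monos_def is_sheaf_def
proof (intro conjI allI impI presheaf_Ls)
  fix a b :: 'l assume ab: "a \<le> b"
  show "inj_on (res (Lsh (Im E)) (Some b) (Some a)) (ob (Lsh (Im E)) (Some b))"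
  proof (rule inj_onI)
    fix x y assume x: "x \<in> ob (Lsh (Im E)) (Some b)" and y: "y \<in> ob (Lsh (Im E)) (Some b)"
      and e: "res (Lsh (Im E)) (Some b) (Some a) x = res (Lsh (Im E)) (Some b) (Some a) y"
    have x': "x = mk b (val x)" and y': "y = mk b (val y)" using x y ob_Ls_Some_E by blast+
    then have "mk a (val x) = mk a (val y)" using e res_Ls[OF ab, of "Im E"] by metis
    then have "val x = val y" by (rule mk_inj)
    then show "x = y" using x' y' by metis
  qed
next
  fix a :: "'l option" and B s
  assume H: "B \<subseteq> {b. b \<le> a} \<and> Sup B = a \<and> (\<forall>b\<in>B. s b \<in> ob (Lsh (Im E)) b) \<and>
       (\<forall>b\<in>B. \<forall>c\<in>B. res (Lsh (Im E)) b (inf b c) (s b) = res (Lsh (Im E)) c (inf b c) (s c))"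
  show "\<exists>!x. x \<in> ob (Lsh (Im E)) a \<and> (\<forall>b\<in>B. res (Lsh (Im E)) a b x = s b)"
  proof (cases a)
    case None
    then have "\<forall>b\<in>B. b = None" using H less_eq_option_None_is_None by blast
    then have "\<forall>b\<in>B. res (Lsh (Im E)) a b (Inl undefined) = s b"
      using H by (metis ob_Ls_None res_Ls_None singletonD)
    then show ?thesis using None by (intro ex1I[of _ "Inl undefined"]) auto
  next
    case (Some t)
    have BS: "\<And>b'. Some b' \<in> B \<Longrightarrow> b' \<le> t" using H Some by auto
    obtain b0 where b0: "Some b0 \<in> B"
    proof (rule ccontr)
      assume "\<not> thesis"
      with that have "\<forall>b\<in>B. b \<le> None" by (metis less_eq_option_None not_None_eq)
      then have "Sup B \<le> None" by (simp add: Sup_least)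
      then show False using H Some by simp
    qed
    define w where "w b' = val (s (Some b'))" for b'
    have sB: "s (Some b') = mk b' (w b') \<and> w b' \<in> VV E b'" if "Some b' \<in> B" for b'
      using H that ob_Ls_Some_E unfolding w_def by blast
    have weq: "w b' = w b0" if "Some b' \<in> B" for b'
    proof -
      have "res (Lsh (Im E)) (Some b') (Some (inf b' b0)) (s (Some b')) =
            res (Lsh (Im E)) (Some b0) (Some (inf b' b0)) (s (Some b0))"
        using H that b0 by (metis inf_Some)
      then have "mk (inf b' b0) (w b') = mk (inf b' b0) (w b0)"
        using sB[OF that] sB[OF b0] res_Ls[of "inf b' b0" b' "Im E"] res_Ls[of "inf b' b0" b0 "Im E"]
        by (metis inf_le1 inf_le2)
      then show ?thesis by (rule mk_inj)
    qed
    define v where "v = w b0"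
    have vV: "v \<in> VV E t"
      unfolding VV_def
    proof (intro CollectI conjI allI impI)
      show "v \<in> ob (Im E) (Some bot)" using sB[OF b0] unfolding v_def VV_def by blast
    next
      fix d assume dt: "d < t"
      obtain b where bB: "b \<in> B" and nb: "\<not> b \<le> Some d"
      proof (rule ccontr)
        assume "\<not> thesis"
        with that have "\<forall>b\<in>B. b \<le> Some d" by blast
        then have "Sup B \<le> Some d" by (simp add: Sup_least)
        then show False using H Some dt by simp
      qed
      then obtain b' where b': "b = Some b'" and db: "d < b'"
        by (cases b) auto
      show "v \<in> ob (Im E) (Some d)"
        using sB[of b'] weq[of b'] bB b' db unfolding v_def VV_def by auto
    qed
    show ?thesis
    proof (rule ex1I[of _ "mk t v"])
      show "mk t v \<in> ob (Lsh (Im E)) a \<and> (\<forall>b\<in>B. res (Lsh (Im E)) a b (mk t v) = s b)"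
      proof (intro conjI ballI)
        show "mk t v \<in> ob (Lsh (Im E)) a" using vV Some by (simp add: ob_Ls)
      next
        fix b assume bB: "b \<in> B"
        show "res (Lsh (Im E)) a b (mk t v) = s b"
        proof (cases b)
          case None then show ?thesis using H bB by auto
        next
          case (Some b')
          then show ?thesis using \<open>a = Some t\<close> res_Ls[OF BS, of b' "Im E" v] sB[of b'] weq[of b'] bB
            unfolding v_def by auto
        qed
      qed
    next
      fix x assume x: "x \<in> ob (Lsh (Im E)) a \<and> (\<forall>b\<in>B. res (Lsh (Im E)) a b x = s b)"
      then have x': "x = mk t (val x)" using Some ob_Ls_Some_E by blast
      have "mk b0 (val x) = mk b0 v"
        using x b0 res_Ls[OF BS[OF b0], of "Im E" "val x"] sB[OF b0] x' Some unfolding v_def by metis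
      then show "x = mk t v" using x' mk_inj by metis
    qed
  qed
qed

lemma comp_Some: "hom_comp (eta (Im E)) (Im_map E) (Some (t::'l::complete_linorder)) x = mk t (res E (Some t) (Some bot) x)"
  unfolding hom_comp_def eta_def Im_map_def mk_def cf_def
  by (auto intro!: ext)

lemma comp_None: "hom_comp (eta (Im E)) (Im_map E) None x = Inl undefined"
  by (simp add: hom_comp_def eta_def)

lemma presheafD:
  assumes "presheaf E"
  shows "\<And>a b x. a \<le> b \<Longrightarrow> x \<in> ob E b \<Longrightarrow> res E b a x \<in> ob E a"
    and "\<And>a x. x \<in> ob E a \<Longrightarrow> res E a a x = x"
    and "\<And>a b c x. c \<le> b \<Longrightarrow> b \<le> a \<Longrightarrow> x \<in> ob E a \<Longrightarrow> res E b c (res E a b x) = res E a c x"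
  using assms unfolding presheaf_def by blast+

lemma res_in_VV:
  assumes E: "presheaf (E::('l::complete_linorder option,'x) psh)" and x: "x \<in> ob E (Some t)"
  shows "res E (Some t) (Some bot) x \<in> VV E t"
  unfolding VV_def ob_Im
proof (intro CollectI conjI allI impI)
  have "res E (Some bot) (Some bot) (res E (Some t) (Some bot) x) = res E (Some t) (Some bot) x"
    using presheafD(3)[OF E, of "Some bot" "Some bot" "Some t" x] x by simp
  moreover have "res E (Some t) (Some bot) x \<in> ob E (Some bot)"
    using presheafD(1)[OF E, of "Some bot" "Some t" x] x by simp
  ultimately show "res E (Some t) (Some bot) x \<in> res E (Some bot) (Some bot) ` ob E (Some bot)"
    by (metis image_eqI)
next
  fix d assume "d < t"
  then have dt: "d \<le> t" by simp
  have "res E (Some d) (Some bot) (res E (Some t) (Some d) x) = res E (Some t) (Some bot) x"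
    using presheafD(3)[OF E, of "Some bot" "Some d" "Some t" x] x dt by simp
  moreover have "res E (Some t) (Some d) x \<in> ob E (Some d)"
    using presheafD(1)[OF E, of "Some d" "Some t" x] x dt by simp
  ultimately show "res E (Some t) (Some bot) x \<in> res E (Some d) (Some bot) ` ob E (Some d)"
    by (metis image_eqI)
qed

lemma hom_Ls:
  assumes E: "presheaf (E::('l::complete_linorder option,'x) psh)"
  shows "psh_hom E (Lsh (Im E)) (hom_comp (eta (Im E)) (Im_map E))"
  unfolding psh_hom_def
proof (intro conjI allI impI)
  fix a x assume x: "x \<in> ob E a"
  show "hom_comp (eta (Im E)) (Im_map E) a x \<in> ob (Lsh (Im E)) a"
  proof (cases a)
    case None then show ?thesis by (simp add: comp_None)
  next
    case (Some t) then show ?thesis using res_in_VV[OF E] x by (simp add: comp_Some ob_Ls)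
  qed
next
  fix a b x assume h: "a \<le> b \<and> x \<in> ob E b"
  show "hom_comp (eta (Im E)) (Im_map E) a (res E b a x) =
        res (Lsh (Im E)) b a (hom_comp (eta (Im E)) (Im_map E) b x)"
  proof (cases a)
    case None then show ?thesis by (simp add: comp_None)
  next
    case (Some c)
    then obtain t where b: "b = Some t" and ct: "c \<le> t" using h by (cases b) auto
    have "res E (Some c) (Some bot) (res E (Some t) (Some c) x) = res E (Some t) (Some bot) x"
      using presheafD(3)[OF E, of "Some bot" "Some c" "Some t" x] h b ct by simp
    then show ?thesis using Some b by (simp add: comp_Some res_Ls[OF ct])
  qed
qed

lemma F_None: "is_sheaf F \<Longrightarrow> \<exists>!z. z \<in> ob F (None::'l::complete_linorder option)"
  unfolding is_sheaf_def
  apply (elim conjE)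
  apply (drule spec[of _ None], drule spec[of _ "{}"], drule spec[of _ "\<lambda>_. undefined"])
  by (simp add: bot_option_def)

lemma F_uniq:
  assumes "sheaf_of_monos F" "z \<in> ob F (Some (t::'l::complete_linorder))" "z' \<in> ob F (Some t)"
    "res F (Some t) (Some bot) z = res F (Some t) (Some bot) z'"
  shows "z = z'"
  using assms unfolding sheaf_of_monos_def by (meson bot.extremum inj_onD)

lemma sup_below:
  assumes D: "dense_ordered TYPE('l::complete_linorder)" and t: "(t::'l) \<noteq> bot"
  shows "Sup {d. d < t} = t"
proof (rule antisym)
  show "Sup {d. d < t} \<le> t" by (auto intro: Sup_least)
next
  show "t \<le> Sup {d. d < t}"
  proof (rule ccontr)
    assume "\<not> t \<le> Sup {d. d < t}"
    then have "Sup {d. d < t} < t" by simp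
    then obtain z where "Sup {d. d < t} < z" "z < t" using D unfolding dense_ordered_def by blast
    then show False by (metis Sup_upper leD mem_Collect_eq)
  qed
qed

lemma F_glue_ex:
  assumes D: "dense_ordered TYPE('l::complete_linorder)" and E: "presheaf E"
    and F: "sheaf_of_monos F" and f: "psh_hom E F f"
    and v: "v \<in> VV E (t::'l)"
  shows "\<exists>z. z \<in> ob F (Some t) \<and> res F (Some t) (Some bot) z = f (Some bot) v"
proof -
  have Fs: "is_sheaf F" using F unfolding sheaf_of_monos_def by blast
  then have FP: "presheaf F" unfolding is_sheaf_def by blast
  have fm: "\<And>a x. x \<in> ob E a \<Longrightarrow> f a x \<in> ob F a"
    and fn: "\<And>a b x. a \<le> b \<Longrightarrow> x \<in> ob E b \<Longrightarrow> f a (res E b a x) = res F b a (f b x)"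
    using f unfolding psh_hom_def by blast+
  define P where "P d z \<longleftrightarrow> z \<in> ob F (Some d) \<and> res F (Some d) (Some bot) z = f (Some bot) v" for d z
  have exd: "\<exists>z. P d z" if "d = bot \<or> d < t" for d
  proof -
    have "v \<in> ob (Im E) (Some d)" using v that unfolding VV_def by blast
    then obtain y where y: "y \<in> ob E (Some d)" "v = res E (Some d) (Some bot) y"
      unfolding ob_Im by blast
    have "P d (f (Some d) y)"
      unfolding P_def using fm[OF y(1)] fn[of "Some bot" "Some d" y] y by simp
    then show ?thesis by blast
  qed
  have uq: "z = z'" if "P d z" "P d z'" for d z z'
    using that F_uniq[OF F, of z d z'] unfolding P_def by simp
  show ?thesis
  proof (cases "t = bot")
    case True
    then show ?thesis using exd[of bot] unfolding P_def by blast
  next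
    case False
    then have bt: "bot < t" by (simp add: bot.not_eq_extremum)
    define s where "s b = (THE z. P (the b) z)" for b
    have sP: "P d (s (Some d))" if dt: "d < t" for d
    proof -
      obtain z where "P d z" using exd[of d] dt by blast
      then have "P d (THE z. P d z)" using uq theI[of "P d" z] by blast
      then show ?thesis unfolding s_def by simp
    qed
    define B where "B = Some ` {d. d < t}"
    have SB: "Sup B = Some t"
    proof -
      have "{d. d < t} \<noteq> {}" using bt by blast
      then have "Some (Sup {d. d<t}) = Sup B" unfolding B_def by (rule Some_Sup)
      then show ?thesis using sup_below[OF D False] by simp
    qed
    have comp: "res F (Some d) (inf (Some d) (Some d')) (s (Some d)) =
                res F (Some d') (inf (Some d) (Some d')) (s (Some d'))" if "d < t" "d' < t" for d d'
    proof -
      have *: "P (inf d e) (res F (Some d) (Some (inf d e)) (s (Some d)))" if "d < t" "inf d e \<le> d" for d e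
      proof -
        have "s (Some d) \<in> ob F (Some d)" using sP[OF that(1)] unfolding P_def by blast
        moreover have "res F (Some d) (Some bot) (s (Some d)) = f (Some bot) v"
          using sP[OF that(1)] unfolding P_def by blast
        moreover have "res F (Some (inf d e)) (Some bot) (res F (Some d) (Some (inf d e)) (s (Some d)))
           = res F (Some d) (Some bot) (s (Some d))"
          using presheafD(3)[OF FP, of "Some bot" "Some (inf d e)" "Some d" "s (Some d)"] that(2) calculation(1)
          by simp
        moreover have "res F (Some d) (Some (inf d e)) (s (Some d)) \<in> ob F (Some (inf d e))"
          using presheafD(1)[OF FP, of "Some (inf d e)" "Some d" "s (Some d)"] that(2) calculation(1)
          by simp
        ultimately show ?thesis unfolding P_def by simp
      qed
      have "P (inf d d') (res F (Some d) (Some (inf d d')) (s (Some d)))" using *[OF that(1)] by simp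
      moreover have "P (inf d d') (res F (Some d') (Some (inf d d')) (s (Some d')))"
        using *[OF that(2), of d] by (simp add: inf_commute)
      ultimately have "res F (Some d) (Some (inf d d')) (s (Some d)) = res F (Some d') (Some (inf d d')) (s (Some d'))"
        by (rule uq)
      then show ?thesis by simp
    qed
    have "\<exists>!x. x \<in> ob F (Some t) \<and> (\<forall>b\<in>B. res F (Some t) b x = s b)"
      using Fs unfolding is_sheaf_def
    proof (elim conjE allE impE)
      show "B \<subseteq> {b. b \<le> Some t} \<and> Sup B = Some t \<and> (\<forall>b\<in>B. s b \<in> ob F b) \<and>
        (\<forall>b\<in>B. \<forall>c\<in>B. res F b (inf b c) (s b) = res F c (inf b c) (s c))"
      proof (intro conjI)
        show "B \<subseteq> {b. b \<le> Some t}" unfolding B_def by auto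
        show "Sup B = Some t" by (rule SB)
        show "\<forall>b\<in>B. s b \<in> ob F b" unfolding B_def using sP unfolding P_def by blast
        show "\<forall>b\<in>B. \<forall>c\<in>B. res F b (inf b c) (s b) = res F c (inf b c) (s c)"
          unfolding B_def using comp by blast
      qed
    qed
    then obtain z where z: "z \<in> ob F (Some t)" "\<forall>b\<in>B. res F (Some t) b z = s b" by blast
    have "res F (Some t) (Some bot) z = s (Some bot)" using z bt unfolding B_def by auto
    moreover have "s (Some bot) = f (Some bot) v"
    proof -
      have "s (Some bot) \<in> ob F (Some bot)" "res F (Some bot) (Some bot) (s (Some bot)) = f (Some bot) v"
        using sP[OF bt] unfolding P_def by blast+
      then show ?thesis using presheafD(2)[OF FP, of "s (Some bot)" "Some bot"] by simp
    qed
    ultimately show ?thesis using z by auto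
  qed
qed

theorem corollary27:
  fixes E :: "('l::complete_linorder option, 'e) psh"
  assumes "dense_ordered TYPE('l)"
    and "presheaf E"
  shows "sheaf_of_monos (Lsh (Im E)) \<and>
         psh_hom E (Lsh (Im E)) (hom_comp (eta (Im E)) (Im_map E)) \<and>
         (\<forall>(F :: ('l option, 'y) psh) f. sheaf_of_monos F \<and> psh_hom E F f \<longrightarrow>
            (\<exists>g. psh_hom (Lsh (Im E)) F g \<and>
                 (\<forall>a x. x \<in> ob E a \<longrightarrow> hom_comp g (hom_comp (eta (Im E)) (Im_map E)) a x = f a x)) \<and>
            (\<forall>g h. psh_hom (Lsh (Im E)) F g \<and> psh_hom (Lsh (Im E)) F h \<and>
                 (\<forall>a x. x \<in> ob E a \<longrightarrow> hom_comp g (hom_comp (eta (Im E)) (Im_map E)) a x = f a x) \<and>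
                 (\<forall>a x. x \<in> ob E a \<longrightarrow> hom_comp h (hom_comp (eta (Im E)) (Im_map E)) a x = f a x)
                 \<longrightarrow> (\<forall>a y. y \<in> ob (Lsh (Im E)) a \<longrightarrow> g a y = h a y)))"
proof (intro conjI allI impI)
  note D = assms(1) and E = assms(2)
  show "sheaf_of_monos (Lsh (Im E))" by (rule sheaf_Ls)
  show "psh_hom E (Lsh (Im E)) (hom_comp (eta (Im E)) (Im_map E))" by (rule hom_Ls[OF E])
  let ?C = "hom_comp (eta (Im E)) (Im_map E)"
  let ?L = "Lsh (Im E)"
  fix F :: "('l option, 'y) psh" and f
  assume FF: "sheaf_of_monos F \<and> psh_hom E F f"
  then have F: "sheaf_of_monos F" and f: "psh_hom E F f" by blast+
  have Fs: "is_sheaf F" using F unfolding sheaf_of_monos_def by blast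
  then have FP: "presheaf F" unfolding is_sheaf_def by blast
  have fm: "\<And>a x. x \<in> ob E a \<Longrightarrow> f a x \<in> ob F a"
    and fn: "\<And>a b x. a \<le> b \<Longrightarrow> x \<in> ob E b \<Longrightarrow> f a (res E b a x) = res F b a (f b x)"
    using f unfolding psh_hom_def by blast+
  obtain n where n: "n \<in> ob F None" and nu: "\<And>z. z \<in> ob F None \<Longrightarrow> z = n"
    using F_None[OF Fs] by blast
  have Cm: "?C (Some t) x = mk t (res E (Some t) (Some bot) x)" for t x by (rule comp_Some)
  {
    define g :: "'l option \<Rightarrow> 'e + ('l \<Rightarrow> 'e) \<Rightarrow> 'y" where "g a y = (case a of None \<Rightarrow> n | Some t \<Rightarrow>
       THE z. z \<in> ob F (Some t) \<and> res F (Some t) (Some bot) z = f (Some bot) (val y))" for a y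
    have gS: "g (Some t) y \<in> ob F (Some t) \<and> res F (Some t) (Some bot) (g (Some t) y) = f (Some bot) (val y)"
      if vy: "val y \<in> VV E t" for t y
    proof -
      obtain z where z: "z \<in> ob F (Some t) \<and> res F (Some t) (Some bot) z = f (Some bot) (val y)"
        using F_glue_ex[OF D E F f vy] by blast
      have "(THE z. z \<in> ob F (Some t) \<and> res F (Some t) (Some bot) z = f (Some bot) (val y)) = z"
        using z F_uniq[OF F] by (intro the_equality) auto
      then show ?thesis using z unfolding g_def by simp
    qed
    have gE: "g (Some t) y = z" if "z \<in> ob F (Some t)" "res F (Some t) (Some bot) z = f (Some bot) (val y)" for t y z
      unfolding g_def using that F_uniq[OF F] by (simp, intro the_equality) auto
    have gm: "g a y \<in> ob F a" if "y \<in> ob ?L a" for a y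
    proof (cases a)
      case None then show ?thesis using n unfolding g_def by simp
    next
      case (Some t) then show ?thesis using gS[of y t] that ob_Ls_Some_E by blast
    qed
    have "psh_hom ?L F g"
      unfolding psh_hom_def
    proof (intro conjI allI impI)
      fix a y assume "y \<in> ob ?L a" then show "g a y \<in> ob F a" by (rule gm)
    next
      fix a b y assume h: "a \<le> b \<and> y \<in> ob ?L b"
      show "g a (res ?L b a y) = res F b a (g b y)"
      proof (cases a)
        case None
        have "res F b a (g b y) \<in> ob F a" using presheafD(1)[OF FP] h gm by blast
        then show ?thesis using None nu unfolding g_def by simp
      next
        case (Some c)
        then obtain t where b: "b = Some t" and ct: "c \<le> t" using h by (cases b) auto
        have y: "y = mk t (val y)" "val y \<in> VV E t" using h b ob_Ls_Some_E by blast+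
        have r: "res ?L b a y = mk c (val y)" using y(1) Some b res_Ls[OF ct] by metis
        have gt: "g (Some t) y \<in> ob F (Some t)" "res F (Some t) (Some bot) (g (Some t) y) = f (Some bot) (val y)"
          using gS[OF y(2)] by blast+
        have "res F (Some c) (Some bot) (res F (Some t) (Some c) (g (Some t) y)) = f (Some bot) (val y)"
          using presheafD(3)[OF FP, of "Some bot" "Some c" "Some t"] gt ct by simp
        moreover have "res F (Some t) (Some c) (g (Some t) y) \<in> ob F (Some c)"
          using presheafD(1)[OF FP] gt ct by simp
        ultimately have "g (Some c) (mk c (val y)) = res F (Some t) (Some c) (g (Some t) y)"
          by (intro gE) auto
        then show ?thesis using r Some b by simp
      qed
    qed
    moreover have "\<forall>a x. x \<in> ob E a \<longrightarrow> hom_comp g ?C a x = f a x"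
    proof (intro allI impI)
      fix a x assume x: "x \<in> ob E a"
      show "hom_comp g ?C a x = f a x"
      proof (cases a)
        case None then show ?thesis using nu fm[OF x] unfolding hom_comp_def g_def by simp
      next
        case (Some t)
        have "g (Some t) (mk t (res E (Some t) (Some bot) x)) = f (Some t) x"
          using fm[of x "Some t"] fn[of "Some bot" "Some t" x] x Some by (intro gE) auto
        moreover have "hom_comp g ?C a x = g a (?C a x)" by (simp add: hom_comp_def)
        ultimately show ?thesis using Some Cm[of t x] by simp
      qed
    qed
    ultimately show "\<exists>g. psh_hom ?L F g \<and> (\<forall>a x. x \<in> ob E a \<longrightarrow> hom_comp g ?C a x = f a x)"
      by blast
  }
  fix g h a y
  assume H: "psh_hom ?L F g \<and> psh_hom ?L F h \<and>
       (\<forall>a x. x \<in> ob E a \<longrightarrow> hom_comp g ?C a x = f a x) \<and>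
       (\<forall>a x. x \<in> ob E a \<longrightarrow> hom_comp h ?C a x = f a x)"
    and y: "y \<in> ob ?L a"
  have key: "\<And>k. psh_hom ?L F k \<Longrightarrow> (\<forall>a x. x \<in> ob E a \<longrightarrow> hom_comp k ?C a x = f a x) \<Longrightarrow>
      \<forall>t y. y \<in> ob ?L (Some t) \<longrightarrow> k (Some t) y \<in> ob F (Some t) \<and>
         res F (Some t) (Some bot) (k (Some t) y) = f (Some bot) (val y)"
  proof (intro allI impI)
    fix k t y assume k: "psh_hom ?L F k" and kc: "\<forall>a x. x \<in> ob E a \<longrightarrow> hom_comp k ?C a x = f a x"
      and y: "y \<in> ob ?L (Some t)"
    have km: "\<And>a x. x \<in> ob ?L a \<Longrightarrow> k a x \<in> ob F a"
      and kn: "\<And>a b x. a \<le> b \<Longrightarrow> x \<in> ob ?L b \<Longrightarrow> k a (res ?L b a x) = res F b a (k b x)"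
      using k unfolding psh_hom_def by blast+
    have yy: "y = mk t (val y)" "val y \<in> VV E t" using y ob_Ls_Some_E by blast+
    have vE: "val y \<in> ob E (Some bot)"
    proof -
      have "val y \<in> res E (Some bot) (Some bot) ` ob E (Some bot)" using yy(2) unfolding VV_def ob_Im by blast
      then show ?thesis using presheafD(2)[OF E] by auto
    qed
    have "res ?L (Some t) (Some bot) y = mk bot (val y)" using yy(1) res_Ls[of bot t] by (metis bot.extremum)
    moreover have "mk bot (val y) = ?C (Some bot) (val y)"
      using presheafD(2)[OF E] vE by (simp add: Cm)
    moreover have "k (Some bot) (?C (Some bot) (val y)) = f (Some bot) (val y)"
      using kc vE unfolding hom_comp_def by blast
    ultimately have "k (Some bot) (res ?L (Some t) (Some bot) y) = f (Some bot) (val y)"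
      by simp
    then show "k (Some t) y \<in> ob F (Some t) \<and> res F (Some t) (Some bot) (k (Some t) y) = f (Some bot) (val y)"
      using kn[of "Some bot" "Some t" y] km[OF y] y by auto
  qed
  show "g a y = h a y"
  proof (cases a)
    case None
    have gh: "psh_hom ?L F g" "psh_hom ?L F h" using H by blast+
    have "g a y \<in> ob F a" using gh(1) y unfolding psh_hom_def by blast
    moreover have "h a y \<in> ob F a" using gh(2) y unfolding psh_hom_def by blast
    ultimately have "g a y \<in> ob F None" "h a y \<in> ob F None" using None by simp_all
    then show ?thesis using nu by blast
  next
    case (Some t)
    have "g (Some t) y \<in> ob F (Some t) \<and> res F (Some t) (Some bot) (g (Some t) y) = f (Some bot) (val y)"
    proof -
      have "psh_hom ?L F g" "\<forall>a x. x \<in> ob E a \<longrightarrow> hom_comp g ?C a x = f a x" using H by blast+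
      from key[OF this] y Some show ?thesis by blast
    qed
    moreover have "h (Some t) y \<in> ob F (Some t) \<and> res F (Some t) (Some bot) (h (Some t) y) = f (Some bot) (val y)"
    proof -
      have "psh_hom ?L F h" "\<forall>a x. x \<in> ob E a \<longrightarrow> hom_comp h ?C a x = f a x" using H by blast+
      from key[OF this] y Some show ?thesis by blast
    qed
    ultimately show ?thesis using F_uniq[OF F, of "g (Some t) y" t "h (Some t) y"] Some by simp
  qed
qed

end
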